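(* Let $a>0$ and $0\le r_0<a$, and consider, in polar coordinates $(r,\theta)$ about a pole $O$, the circle of radius $a$ whose centre $C$ has polar coordinates $(r_0,\theta_0)$. Thus $O$ lies strictly inside the circle, and for each direction $\theta$ the ray from $O$ in direction $\theta$ meets the circle at distance $$r(\theta)=r_0\cos(\theta-\theta_0)+\sqrt{a^2-r_0^2\sin^2(\theta-\theta_0)}$$ from $O$. Let $\theta_1<\theta_2<\theta_3<\theta_4<\theta_1+\pi$ and set $\theta_{i+4}=\theta_i+\pi$ for $i=1,2,3,4$ and $\theta_9=\theta_1+2\pi$. The four lines through $O$ in the directions $\theta_1,\theta_2,\theta_3,\theta_4$ divide the disc into eight sectors; for $1\le i\le 8$ let $$S_i=\frac12\int_{\theta_i}^{\theta_{i+1}} r(\theta)^2\,d\theta$$ be the area of the sector $\{O+\rho(\cos\theta,\sin\theta):\ \theta_i\le\theta\le\theta_{i+1},\ 0\le\rho\le r(\theta)\}$. Then $$S_1+S_3+S_5+S_7=S_2+S_4+S_6+S_8$$ if and only if $$\frac{r_0^2}{2}\Big[\sin 2(\theta_2-\theta_0)-\sin 2(\theta_1-\theta_0)+\sin 2(\theta_4-\theta_0)-\sin 2(\theta_3-\theta_0)\Big]+a^2\Big(\theta_2-\theta_1+\theta_4-\theta_3-\frac{\pi}{2}\Big)=0 .$$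
   Context: Polar coordinates are taken about the pole $O$; the point with polar coordinates $(r,\theta)$ is $O+r(\cos\theta,\sin\theta)$. The alternative sector sums are the sums of the areas of the odd-indexed sectors and of the even-indexed sectors, respectively. *)

theory Defs
  imports "HOL-Analysis.Analysis"
begin

definition circ_r :: "real \<Rightarrow> real \<Rightarrow> real \<Rightarrow> real \<Rightarrow> real" where
  "circ_r a r0 th0 th = r0 * cos (th - th0) + sqrt (a^2 - r0^2 * (sin (th - th0))^2)"

definition sector_area :: "real \<Rightarrow> real \<Rightarrow> real \<Rightarrow> real \<Rightarrow> real \<Rightarrow> real" where
  "sector_area a r0 th0 alpha beta = (1/2) * integral {alpha..beta} (\<lambda>th. (circ_r a r0 th0 th)^2)"

definition ext_angle :: "real \<Rightarrow> real \<Rightarrow> real \<Rightarrow> real \<Rightarrow> nat \<Rightarrow> real" where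
  "ext_angle t1 t2 t3 t4 i =
     (if i = 1 then t1 else if i = 2 then t2 else if i = 3 then t3 else if i = 4 then t4
      else if i = 5 then t1 + pi else if i = 6 then t2 + pi else if i = 7 then t3 + pi
      else if i = 8 then t4 + pi else t1 + 2 * pi)"

end

theory Submission
  imports Defs
begin

lemma alg_aux:
  fixes r0 c s Q a :: real
  assumes "Q^2 = a^2 - r0^2 * s^2"
  shows "(- r0 * c + Q)^2 + (r0 * c + Q)^2 = 2 * (a^2 + r0^2 * (c^2 - s^2))"
proof -
  have "(- r0 * c + Q)^2 + (r0 * c + Q)^2 = 2 * (r0^2 * c^2) + 2 * Q^2"
    by (simp add: power2_eq_square algebra_simps)
  thus ?thesis using assms by (simp add: algebra_simps)
qed

lemma circ_r_shift:
  assumes "r0^2 \<le> a^2"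
  shows "(circ_r a r0 th0 (pi + x))^2 + (circ_r a r0 th0 x)^2 = 2 * (a^2 + r0^2 * cos (2 * (x - th0)))"
proof -
  have pe: "pi + x - th0 = (x - th0) + pi" by simp
  have s: "sin (pi + x - th0) = - sin (x - th0)" "cos (pi + x - th0) = - cos (x - th0)"
    unfolding pe by (rule sin_periodic_pi, rule cos_periodic_pi)
  define Q where "Q = sqrt (a^2 - r0^2 * (sin (x - th0))^2)"
  have e1: "circ_r a r0 th0 (pi + x) = - r0 * cos (x - th0) + Q"
    unfolding circ_r_def Q_def s by simp
  have e2: "circ_r a r0 th0 x = r0 * cos (x - th0) + Q"
    unfolding circ_r_def Q_def by simp
  have "r0^2 * (sin (x - th0))^2 \<le> r0^2 * 1"
    by (intro mult_left_mono) (simp_all add: square_le_1)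
  hence q: "Q^2 = a^2 - r0^2 * (sin (x - th0))^2" unfolding Q_def using assms by simp
  have c2: "cos (2 * (x - th0)) = (cos (x - th0))^2 - (sin (x - th0))^2"
    by (rule cos_double)
  show ?thesis unfolding e1 e2 c2 by (rule alg_aux[OF q])
qed

lemma cont_circ: "continuous_on S (\<lambda>x. (circ_r a r0 th0 x)^2)"
  unfolding circ_r_def by (intro continuous_intros)

lemma pair:
  assumes "r0^2 \<le> a^2" "al \<le> be"
  shows "sector_area a r0 th0 al be + sector_area a r0 th0 (al + pi) (be + pi) =
     a^2 * (be - al) + r0^2 / 2 * (sin (2 * (be - th0)) - sin (2 * (al - th0)))"
proof -
  define f where "f = (\<lambda>x. (circ_r a r0 th0 x)^2)"
  have int: "f integrable_on {u..v}" for u v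
    unfolding f_def by (intro integrable_continuous_interval cont_circ)
  have sh: "integral {al + pi..be + pi} f = integral {al..be} (f \<circ> (+) pi)"
    using integral_shift_Icc_real[of al be f pi] by simp
  have int2: "(f \<circ> (+) pi) integrable_on {al..be}"
    unfolding f_def o_def circ_r_def by (intro integrable_continuous_interval continuous_intros)
  have "integral {al..be} f + integral {al..be} (f \<circ> (+) pi)
      = integral {al..be} (\<lambda>x. f x + (f \<circ> (+) pi) x)"
    using integral_add[OF int int2] by simp
  also have "\<dots> = integral {al..be} (\<lambda>x. 2 * (a^2 + r0^2 * cos (2 * (x - th0))))"
    unfolding f_def o_def using circ_r_shift[OF assms(1)] by (simp add: add.commute)
  also have "\<dots> = 2 * (a^2 * be + r0^2 / 2 * sin (2 * (be - th0))) - 2 * (a^2 * al + r0^2 / 2 * sin (2 * (al - th0)))"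
  proof (rule integral_unique, rule fundamental_theorem_of_calculus[OF assms(2)])
    fix x assume "x \<in> {al..be}"
    show "((\<lambda>x. 2 * (a^2 * x + r0^2 / 2 * sin (2 * (x - th0)))) has_vector_derivative
            2 * (a^2 + r0^2 * cos (2 * (x - th0)))) (at x within {al..be})"
      unfolding has_real_derivative_iff_has_vector_derivative[symmetric]
      by (auto intro!: derivative_eq_intros)
  qed
  finally show ?thesis unfolding sector_area_def f_def[symmetric] sh
    by (simp add: algebra_simps)
qed

lemma aux: fixes L R E :: real shows "L - R = 2 * E \<Longrightarrow> (L = R) \<longleftrightarrow> E = 0" by linarith
lemma fin:
  fixes S1 S2 S3 S4 S5 S6 S7 S8 c k x1 x2 x3 x4 t1 t2 t3 t4 :: real
  assumes "S1 + S5 = c * (t2 - t1) + k * (x2 - x1)"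
   "S3 + S7 = c * (t4 - t3) + k * (x4 - x3)"
   "S2 + S6 = c * (t3 - t2) + k * (x3 - x2)"
   "S4 + S8 = c * (t1 + pi - t4) + k * (x1 - x4)"
  shows "S1 + S3 + S5 + S7 = S2 + S4 + S6 + S8 \<longleftrightarrow> k * (x2 - x1 + x4 - x3) + c * (t2 - t1 + t4 - t3 - pi / 2) = 0"
  by (rule aux) (use assms in \<open>simp add: algebra_simps\<close>)

theorem mainTheorem1:
  fixes a r0 th0 t1 t2 t3 t4 :: real
  assumes "a > 0" and "0 \<le> r0" and "r0 < a"
    and "t1 < t2" and "t2 < t3" and "t3 < t4" and "t4 < t1 + pi"
  defines "S \<equiv> \<lambda>i::nat. sector_area a r0 th0 (ext_angle t1 t2 t3 t4 i) (ext_angle t1 t2 t3 t4 (i + 1))"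
  shows "S 1 + S 3 + S 5 + S 7 = S 2 + S 4 + S 6 + S 8 \<longleftrightarrow>
    r0^2 / 2 * (sin (2 * (t2 - th0)) - sin (2 * (t1 - th0)) + sin (2 * (t4 - th0)) - sin (2 * (t3 - th0)))
      + a^2 * (t2 - t1 + t4 - t3 - pi / 2) = 0"
proof -
  have r: "r0^2 \<le> a^2" using assms(2,3) by (simp add: power_mono)
  have e: "ext_angle t1 t2 t3 t4 1 = t1" "ext_angle t1 t2 t3 t4 2 = t2"
    "ext_angle t1 t2 t3 t4 3 = t3" "ext_angle t1 t2 t3 t4 4 = t4"
    "ext_angle t1 t2 t3 t4 5 = t1 + pi" "ext_angle t1 t2 t3 t4 6 = t2 + pi"
    "ext_angle t1 t2 t3 t4 7 = t3 + pi" "ext_angle t1 t2 t3 t4 8 = t4 + pi"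
    "ext_angle t1 t2 t3 t4 9 = t1 + 2 * pi"
    by (simp_all add: ext_angle_def)
  have S: "S 1 = sector_area a r0 th0 t1 t2" "S 2 = sector_area a r0 th0 t2 t3"
    "S 3 = sector_area a r0 th0 t3 t4" "S 4 = sector_area a r0 th0 t4 (t1 + pi)"
    "S 5 = sector_area a r0 th0 (t1 + pi) (t2 + pi)" "S 6 = sector_area a r0 th0 (t2 + pi) (t3 + pi)"
    "S 7 = sector_area a r0 th0 (t3 + pi) (t4 + pi)" "S 8 = sector_area a r0 th0 (t4 + pi) (t1 + 2 * pi)"
    unfolding S_def by (simp_all add: ext_angle_def)
  have p1: "S 1 + S 5 = a^2 * (t2 - t1) + r0^2 / 2 * (sin (2 * (t2 - th0)) - sin (2 * (t1 - th0)))"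
    unfolding S(1) S(5) by (rule pair[OF r]) (use assms(4) in linarith)
  have p3: "S 3 + S 7 = a^2 * (t4 - t3) + r0^2 / 2 * (sin (2 * (t4 - th0)) - sin (2 * (t3 - th0)))"
    unfolding S(3) S(7) by (rule pair[OF r]) (use assms(6) in linarith)
  have p2: "S 2 + S 6 = a^2 * (t3 - t2) + r0^2 / 2 * (sin (2 * (t3 - th0)) - sin (2 * (t2 - th0)))"
    unfolding S(2) S(6) by (rule pair[OF r]) (use assms(5) in linarith)
  have sp: "sin (2 * (t1 + pi - th0)) = sin (2 * (t1 - th0))"
  proof -
    have "2 * (t1 + pi - th0) = 2 * (t1 - th0) + 2 * pi" by (simp add: algebra_simps)
    thus ?thesis by (metis sin_periodic)
  qed
  have tp: "t1 + 2 * pi = t1 + pi + pi" by simp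
  have p4: "S 4 + S 8 = a^2 * (t1 + pi - t4) + r0^2 / 2 * (sin (2 * (t1 - th0)) - sin (2 * (t4 - th0)))"
    unfolding S(4) S(8) tp sp[symmetric] by (rule pair[OF r]) (use assms(7) in linarith)
  show ?thesis by (rule fin[OF p1 p3 p2 p4])
qed
end
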